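(* Let $(X,d)$ be a compact metric space, $\lambda>0$, and $\ell\in\mathrm{LSC}(X)$ bounded with $\inf_X\ell=0$. Then: (i) if $u,v\in\mathrm{LSC}(X)$ are, respectively, a bounded subsolution and a bounded supersolution of $(\mathcal{G}_\lambda)$, then $u\le v$; (ii) the equation $(\mathcal{G}_\lambda)$ admits a unique (Lipschitz) solution.
   Context: $\mathrm{LSC}(X)$ is the set of real-valued lower semicontinuous functions on $X$. Global slope: $G[u](x)=\sup_{y\neq x}\frac{(u(x)-u(y))_+}{d(x,y)}$ if $u(x)<+\infty$, $G[u](x)=+\infty$ otherwise. Equation $(\mathcal{G}_\lambda)$: $\lambda u+G[u]=\ell$ on $X$ with $\inf_Xu=0$. A subsolution is $u:X\to\mathbb{R}\cup\{+\infty\}$ with $\inf_Xu=0$ and $\lambda u+G[u]\le\ell$ on $X$; a supersolution is a lower semicontinuous $v:X\to\mathbb{R}\cup\{+\infty\}$ with $\inf_Xv=0$ and $\lambda v+G[v]\ge\ell$ on $X$; a solution is a lower semicontinuous function that is both. *)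

theory Defs
  imports "HOL-Analysis.Analysis" "HOL-Library.Extended_Real"
begin

definition lsc :: "('a::topological_space \<Rightarrow> 'b::linorder_topology) \<Rightarrow> bool" where
  "lsc f \<longleftrightarrow> (\<forall>x. \<forall>c. c < f x \<longrightarrow> (\<forall>\<^sub>F y in nhds x. c < f y))"

text \<open>Global slope of u : X \<rightarrow> \<real> \<union> {+\<infinity>} (encoded in ereal; the value -\<infinity> is never
  used for the functions under consideration). The supremum of the empty family
  (one-point space) is taken to be 0, consistent with the positive parts.\<close>
definition global_slope :: "('a::metric_space \<Rightarrow> ereal) \<Rightarrow> 'a \<Rightarrow> ereal" where
  "global_slope u x =
     (if u x < \<infinity>
      then sup 0 (SUP y\<in>{y. y \<noteq> x}. max 0 (u x - u y) / ereal (dist x y))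
      else \<infinity>)"

definition no_minus_inf :: "('a \<Rightarrow> ereal) \<Rightarrow> bool" where
  "no_minus_inf u \<longleftrightarrow> (\<forall>x. u x \<noteq> -\<infinity>)"

definition is_subsolution :: "real \<Rightarrow> ('a::metric_space \<Rightarrow> real) \<Rightarrow> ('a \<Rightarrow> ereal) \<Rightarrow> bool" where
  "is_subsolution lam l u \<longleftrightarrow> no_minus_inf u \<and> (INF x. u x) = 0 \<and>
     (\<forall>x. ereal lam * u x + global_slope u x \<le> ereal (l x))"

definition is_supersolution :: "real \<Rightarrow> ('a::metric_space \<Rightarrow> real) \<Rightarrow> ('a \<Rightarrow> ereal) \<Rightarrow> bool" where
  "is_supersolution lam l v \<longleftrightarrow> no_minus_inf v \<and> lsc v \<and> (INF x. v x) = 0 \<and>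
     (\<forall>x. ereal lam * v x + global_slope v x \<ge> ereal (l x))"

definition is_solution :: "real \<Rightarrow> ('a::metric_space \<Rightarrow> real) \<Rightarrow> ('a \<Rightarrow> ereal) \<Rightarrow> bool" where
  "is_solution lam l w \<longleftrightarrow> lsc w \<and> is_subsolution lam l w \<and> is_supersolution lam l w"

end

theory Submission
  imports Defs
begin


lemma gs_real:
  fixes u :: "'a::metric_space \<Rightarrow> real"
  shows "global_slope (\<lambda>x. ereal (u x)) x =
     sup 0 (SUP y\<in>{y. y \<noteq> x}. ereal (max 0 (u x - u y) / dist x y))"
proof -
  have "max 0 (ereal (u x) - ereal (u y)) / ereal (dist x y) = ereal (max 0 (u x - u y) / dist x y)"
    if "y \<noteq> x" for y
  proof -
    have "dist x y > 0" using that by simp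
    then show ?thesis by (simp add: max_def)
  qed
  then show ?thesis unfolding global_slope_def by (auto intro!: SUP_cong arg_cong2[where f=sup])
qed

lemma gs_ge0: "0 \<le> global_slope (\<lambda>x. ereal (u x)) x"
  unfolding gs_real by simp

lemma gs_term:
  fixes u :: "'a::metric_space \<Rightarrow> real"
  assumes "y \<noteq> x"
  shows "ereal (max 0 (u x - u y) / dist x y) \<le> global_slope (\<lambda>x. ereal (u x)) x"
  unfolding gs_real using assms by (intro le_supI2 SUP_upper) auto

lemma gs_le:
  fixes u :: "'a::metric_space \<Rightarrow> real"
  shows "global_slope (\<lambda>x. ereal (u x)) x \<le> ereal c \<longleftrightarrow> 0 \<le> c \<and> (\<forall>y. u x - u y \<le> c * dist x y)"
proof
  assume h: "global_slope (\<lambda>x. ereal (u x)) x \<le> ereal c"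
  have c0: "0 \<le> c" using h gs_ge0[of u x] by (metis ereal_less_eq(5) order.trans zero_ereal_def)
  have "u x - u y \<le> c * dist x y" for y
  proof (cases "y = x")
    case True then show ?thesis by simp
  next
    case False
    then have d: "dist x y > 0" by simp
    have "ereal (max 0 (u x - u y) / dist x y) \<le> ereal c" using gs_term[OF False, of u] h by (rule order.trans)
    then have "max 0 (u x - u y) / dist x y \<le> c" by simp
    then have "max 0 (u x - u y) \<le> c * dist x y" using d by (simp add: divide_le_eq)
    then show ?thesis by simp
  qed
  with c0 show "0 \<le> c \<and> (\<forall>y. u x - u y \<le> c * dist x y)" by blast
next
  assume h: "0 \<le> c \<and> (\<forall>y. u x - u y \<le> c * dist x y)"
  show "global_slope (\<lambda>x. ereal (u x)) x \<le> ereal c"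
    unfolding gs_real
  proof (intro sup_least SUP_least)
    show "0 \<le> ereal c" using h by simp
  next
    fix y assume "y \<in> {y. y \<noteq> x}"
    then have d: "dist x y > 0" by simp
    have "max 0 (u x - u y) \<le> c * dist x y" using h d by (simp add: max_def)
    then have "max 0 (u x - u y) / dist x y \<le> c" using d by (simp add: divide_le_eq)
    then show "ereal (max 0 (u x - u y) / dist x y) \<le> ereal c" by simp
  qed
qed

lemma sub_iff:
  fixes u :: "'a::metric_space \<Rightarrow> real"
  shows "ereal lam * ereal (u x) + global_slope (\<lambda>x. ereal (u x)) x \<le> ereal c \<longleftrightarrow>
     lam * u x \<le> c \<and> (\<forall>y. u x - u y \<le> (c - lam * u x) * dist x y)"
proof -
  have "ereal lam * ereal (u x) + global_slope (\<lambda>x. ereal (u x)) x \<le> ereal c \<longleftrightarrow>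
        global_slope (\<lambda>x. ereal (u x)) x \<le> ereal (c - lam * u x)"
    using gs_ge0[of u x]
    by (cases "global_slope (\<lambda>x. ereal (u x)) x") auto
  then show ?thesis using gs_le[of u x "c - lam * u x"] by auto
qed


lemma lsc_min:
  fixes f :: "'a::topological_space \<Rightarrow> real"
  assumes cpt: "compact (UNIV :: 'a set)"
    and ls: "\<And>x c. c < f x \<Longrightarrow> eventually (\<lambda>y. c < f y) (nhds x)"
  shows "\<exists>x0. \<forall>y. f x0 \<le> f y"
proof (rule ccontr)
  assume "\<not> ?thesis"
  then have nm: "\<forall>x. \<exists>z. f z < f x" by (simp add: not_le)
  define T where "T z = {y. f z < f y}" for z
  have opn: "open (T z)" for z
  proof (rule open_subopen[THEN iffD2], intro ballI)
    fix y assume "y \<in> T z"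
    then have "f z < f y" by (simp add: T_def)
    then have "eventually (\<lambda>w. f z < f w) (nhds y)" by (rule ls)
    then obtain S where S: "open S" "y \<in> S" "\<forall>w\<in>S. f z < f w" unfolding eventually_nhds by blast
    then have "S \<subseteq> T z" unfolding T_def by blast
    with S show "\<exists>S. open S \<and> y \<in> S \<and> S \<subseteq> T z" by blast
  qed
  have cov: "UNIV \<subseteq> (\<Union>c\<in>UNIV. T c)"
  proof
    fix x :: 'a
    obtain z where "f z < f x" using nm by blast
    then have "x \<in> T z" by (simp add: T_def)
    then show "x \<in> (\<Union>c\<in>UNIV. T c)" by blast
  qed
  obtain s' where s': "finite s'" "UNIV \<subseteq> (\<Union>c\<in>s'. T c)"
    by (rule compactE_image[OF cpt _ cov]) (rule opn)
  obtain i0 where "i0 \<in> s'" using s'(2) by blast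
  then have ne: "f ` s' \<noteq> {}" by blast
  have fin: "finite (f ` s')" using s'(1) by simp
  have "Min (f ` s') \<in> f ` s'" using Min_in[OF fin ne] .
  then obtain j where j: "j \<in> s'" "f j = Min (f ` s')" by force
  obtain i where i: "i \<in> s'" "j \<in> T i" using s'(2) by blast
  have "f j \<le> f i" unfolding j(2) using fin i(1) by (intro Min_le) auto
  moreover have "f i < f j" using i by (simp add: T_def)
  ultimately show False by simp
qed

lemma comparison:
  fixes u v l :: "'a::metric_space \<Rightarrow> real"
  assumes cpt: "compact (UNIV :: 'a set)" and lam: "lam > 0"
    and lB: "\<And>x. l x \<le> B"
    and subu: "\<And>x. ereal lam * ereal (u x) + global_slope (\<lambda>x. ereal (u x)) x \<le> ereal (l x)"
    and u0: "\<And>x. 0 \<le> u x"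
    and supv: "\<And>x. ereal (l x) \<le> ereal lam * ereal (v x) + global_slope (\<lambda>x. ereal (v x)) x"
    and lscv: "lsc (\<lambda>x. ereal (v x))"
  shows "u x \<le> v x"
proof -
  have P: "u x - u y \<le> (l x - lam * u x) * dist x y" for x y
    using subu[of x] unfolding sub_iff by blast
  have Pl: "lam * u x \<le> l x" for x
    using subu[of x] unfolding sub_iff by blast
  have L1: "u x - u y \<le> B * dist x y" for x y
  proof -
    have "0 \<le> lam * u x" using lam u0[of x] by simp
    then have "l x - lam * u x \<le> B" using lB[of x] by linarith
    then have "(l x - lam * u x) * dist x y \<le> B * dist x y"
      by (rule mult_right_mono) simp
    then show ?thesis using P[of x y] by linarith
  qed
  have B0: "0 \<le> B"
  proof -
    have "0 \<le> lam * u undefined" using lam u0[of undefined] by simp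
    then show ?thesis using lB[of undefined] Pl[of undefined] by linarith
  qed
  have lip: "B-lipschitz_on UNIV u"
  proof (rule lipschitz_onI)
    fix x y :: 'a
    show "dist (u x) (u y) \<le> B * dist x y"
    proof -
      have "dist y x = dist x y" by (rule dist_commute)
      then show ?thesis using L1[of x y] L1[of y x] unfolding dist_real_def by (simp add: abs_le_iff)
    qed
  qed (rule B0)
  have cont: "isCont u x" for x
    using lipschitz_on_continuous_on[OF lip] by (simp add: continuous_on_eq_continuous_at)
  have lscv': "eventually (\<lambda>y. c < v y) (nhds x)" if "c < v x" for c x
  proof -
    have "ereal c < ereal (v x)" using that by simp
    then have "eventually (\<lambda>y. ereal c < ereal (v y)) (nhds x)"
      using lscv unfolding lsc_def by blast
    then show ?thesis by simp
  qed
  have lf: "eventually (\<lambda>y. c < v y - u y) (nhds x)" if "c < v x - u x" for c x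
  proof -
    define e where "e = (v x - u x - c) / 2"
    have e: "e > 0" using that by (simp add: e_def)
    have "eventually (\<lambda>y. v x - e < v y) (nhds x)" using lscv'[of "v x - e" x] e by simp
    moreover have "eventually (\<lambda>y. u y < u x + e) (nhds x)"
      unfolding eventually_nhds_metric
    proof (intro exI[of _ "e / (B + 1)"] conjI allI impI)
      show "0 < e / (B + 1)" using e B0 by simp
    next
      fix y assume "dist y x < e / (B + 1)"
      then have "(B + 1) * dist y x < e" using B0 by (simp add: field_simps)
      moreover have "u y - u x \<le> B * dist y x" by (rule L1)
      moreover have "B * dist y x \<le> (B + 1) * dist y x" by (simp add: algebra_simps)
      ultimately show "u y < u x + e" by linarith
    qed
    ultimately have "eventually (\<lambda>y. v x - e < v y \<and> u y < u x + e) (nhds x)"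
      by (rule eventually_conj)
    moreover have ce: "v x - e - (u x + e) = c" by (simp add: e_def)
    ultimately show ?thesis
      by (elim eventually_mono) (use ce in linarith)
  qed
  obtain x0 where x0: "\<forall>y. v x0 - u x0 \<le> v y - u y"
    using lsc_min[of "\<lambda>y. v y - u y", OF cpt lf] by blast
  obtain gu where gu: "global_slope (\<lambda>x. ereal (u x)) x0 = ereal gu"
    and gul: "lam * u x0 + gu \<le> l x0"
  proof -
    have "global_slope (\<lambda>x. ereal (u x)) x0 \<le> ereal (l x0 - lam * u x0)"
      using subu[of x0] unfolding sub_iff gs_le by simp
    with gs_ge0[of u x0] show ?thesis using that
      by (cases "global_slope (\<lambda>x. ereal (u x)) x0") auto
  qed
  have "global_slope (\<lambda>x. ereal (v x)) x0 \<le> global_slope (\<lambda>x. ereal (u x)) x0"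
    unfolding gs_real
  proof (intro sup_mono SUP_mono)
    fix y assume "y \<in> {y. y \<noteq> x0}"
    have "max 0 (v x0 - v y) / dist x0 y \<le> max 0 (u x0 - u y) / dist x0 y"
    proof (rule divide_right_mono)
      show "max 0 (v x0 - v y) \<le> max 0 (u x0 - u y)"
        using x0[rule_format, of y] by (intro max.mono) linarith+
    qed simp
    then show "\<exists>m\<in>{y. y \<noteq> x0}. ereal (max 0 (v x0 - v y) / dist x0 y) \<le> ereal (max 0 (u x0 - u m) / dist x0 m)"
      using \<open>y \<in> _\<close> by auto
  qed simp
  then have a: "global_slope (\<lambda>x. ereal (v x)) x0 \<le> ereal gu" using gu by simp
  have "ereal (l x0) \<le> ereal (lam * v x0 + gu)"
  proof -
    have "ereal lam * ereal (v x0) + global_slope (\<lambda>x. ereal (v x)) x0 \<le> ereal lam * ereal (v x0) + ereal gu"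
      using a by (rule add_left_mono)
    then have "ereal (lam * v x0) + global_slope (\<lambda>x. ereal (v x)) x0 \<le> ereal (lam * v x0 + gu)" by simp
    moreover have "ereal (l x0) \<le> ereal (lam * v x0) + global_slope (\<lambda>x. ereal (v x)) x0"
      using supv[of x0] by simp
    ultimately show ?thesis by (rule order.trans[rotated])
  qed
  then have "l x0 \<le> lam * v x0 + gu" by simp
  with gul have "lam * u x0 \<le> lam * v x0" by linarith
  with lam have "u x0 \<le> v x0" by simp
  then show ?thesis using x0[rule_format, of x] by simp
qed



lemma perron:
  fixes l :: "'a::metric_space \<Rightarrow> real"
  assumes lam: "lam > 0" and l0: "\<And>x. 0 \<le> l x" and lscl: "lsc l"
  obtains w where "\<And>x. 0 \<le> w x" "\<And>x. lam * w x \<le> l x"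
    "\<And>x y. w x - w y \<le> (l x - lam * w x) * dist x y"
    "\<And>x. ereal (l x) \<le> ereal lam * ereal (w x) + global_slope (\<lambda>x. ereal (w x)) x"
proof -
  define Q where "Q u \<longleftrightarrow> (\<forall>x. 0 \<le> u x) \<and> (\<forall>x. lam * u x \<le> l x) \<and>
     (\<forall>x y. u x - u y \<le> (l x - lam * u x) * dist x y)" for u :: "'a \<Rightarrow> real"
  define S where "S = {u. Q u}"
  define w where "w x = (SUP u\<in>S. u x)" for x
  have Q0: "(\<lambda>_. 0) \<in> S" using l0 by (simp add: S_def Q_def)
  then have Sne: "S \<noteq> {}" by blast
  have ub: "u x \<le> l x / lam" if "u \<in> S" for u x
  proof -
    have "lam * u x \<le> l x" using that by (simp add: S_def Q_def)
    then show ?thesis using lam by (simp add: pos_le_divide_eq mult.commute)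
  qed
  have bdd: "bdd_above ((\<lambda>u. u x) ` S)" for x
    using ub by (auto intro!: bdd_aboveI)
  have upper: "u x \<le> w x" if "u \<in> S" for u x
    unfolding w_def using bdd that by (rule cSUP_upper2) simp
  have w0: "0 \<le> w x" for x using upper[OF Q0, of x] by simp
  have wub: "w x \<le> l x / lam" for x
    unfolding w_def using Sne by (rule cSUP_least) (rule ub)
  have wl: "lam * w x \<le> l x" for x
    using wub[of x] lam by (simp add: pos_le_divide_eq mult.commute)
  have wP: "w x - w y \<le> (l x - lam * w x) * dist x y" for x y
  proof -
    define D where "D = 1 + lam * dist x y"
    have D: "D > 0" using lam by (simp add: D_def add_pos_nonneg)
    have "u x \<le> (l x * dist x y + w y) / D" if "u \<in> S" for u
    proof -
      have "u x - u y \<le> (l x - lam * u x) * dist x y" using that by (simp add: S_def Q_def)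
      moreover have "u y \<le> w y" using upper[OF that] .
      ultimately have "u x * D \<le> l x * dist x y + w y"
        by (simp add: D_def algebra_simps)
      then show ?thesis using D by (simp add: pos_le_divide_eq)
    qed
    then have "w x \<le> (l x * dist x y + w y) / D"
      unfolding w_def using Sne by (intro cSUP_least) auto
    then have "w x * D \<le> l x * dist x y + w y" using D by (simp add: pos_le_divide_eq)
    then show ?thesis by (simp add: D_def algebra_simps)
  qed
  have wS: "w \<in> S" using w0 wl wP by (simp add: S_def Q_def)
  have super: "ereal (l x0) \<le> ereal lam * ereal (w x0) + global_slope (\<lambda>x. ereal (w x)) x0" for x0
  proof (rule ccontr)
    assume nsup: "\<not> ?thesis"
    define a where "a = w x0"
    have "global_slope (\<lambda>x. ereal (w x)) x0 \<le> ereal (l x0 - lam * w x0)"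
      unfolding gs_le using wl[of x0] wP[of x0] by simp
    with gs_ge0[of w x0] obtain g where g: "global_slope (\<lambda>x. ereal (w x)) x0 = ereal g"
      by (cases "global_slope (\<lambda>x. ereal (w x)) x0") auto
    have g0: "0 \<le> g" and gw: "\<And>y. w x0 - w y \<le> g * dist x0 y"
      using gs_le[of w x0 g] g by auto
    have lt: "lam * a + g < l x0" using nsup g by (simp add: a_def)
    define \<eta> where "\<eta> = (l x0 - lam * a - g) / 3"
    have eta: "\<eta> > 0" using lt by (simp add: \<eta>_def)
    have "eventually (\<lambda>z. l x0 - \<eta> < l z) (nhds x0)"
      using lscl eta unfolding lsc_def by simp
    then obtain \<rho> where rho: "\<rho> > 0" and rhoP: "\<And>z. dist z x0 < \<rho> \<Longrightarrow> l x0 - \<eta> < l z"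
      unfolding eventually_nhds_metric by blast
    define t where "t = min (\<eta> * \<rho>) (\<eta> / lam)"
    have t0: "t > 0" using eta rho lam by (simp add: t_def)
    have t1: "t \<le> \<eta> * \<rho>" by (simp add: t_def)
    have "t \<le> \<eta> / lam" by (simp add: t_def)
    then have "lam * t \<le> lam * (\<eta> / lam)" using lam by (intro mult_left_mono) auto
    then have t2: "lam * t \<le> \<eta>" using lam by simp
    define K where "K = g + \<eta>"
    have K0: "K \<ge> 0" using g0 eta by (simp add: K_def)
    define \<phi> where "\<phi> y = a + t - K * dist x0 y" for y
    define wt where "wt y = max (w y) (\<phi> y)" for y
    have key: "K \<le> l z - lam * \<phi> z" if "w z < \<phi> z" for z
    proof -
      have "a - g * dist x0 z \<le> w z" using gw[of z] by (simp add: a_def)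
      with that have "\<eta> * dist x0 z < t" by (simp add: \<phi>_def K_def algebra_simps)
      also have "\<dots> \<le> \<eta> * \<rho>" by (rule t1)
      finally have "dist x0 z < \<rho>" using eta by simp
      then have lz: "l x0 - \<eta> < l z" using rhoP by (simp add: dist_commute)
      have "\<phi> z \<le> a + t" using K0 by (simp add: \<phi>_def)
      then have "lam * \<phi> z \<le> lam * (a + t)" using lam by simp
      then have "lam * \<phi> z \<le> lam * a + \<eta>" using t2 by (simp add: algebra_simps)
      moreover have "l x0 = lam * a + g + 3 * \<eta>" unfolding \<eta>_def by (simp add: field_simps)
      ultimately show ?thesis using lz unfolding K_def by linarith
    qed
    have "wt \<in> S" unfolding S_def Q_def mem_Collect_eq
    proof (intro conjI allI)
      fix x show "0 \<le> wt x" using w0[of x] by (simp add: wt_def)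
    next
      fix z show "lam * wt z \<le> l z"
      proof (cases "w z < \<phi> z")
        case True
        then show ?thesis using key[OF True] K0 by (simp add: wt_def)
      next
        case False
        then show ?thesis using wl[of z] by (simp add: wt_def)
      qed
    next
      fix z y show "wt z - wt y \<le> (l z - lam * wt z) * dist z y"
      proof (cases "w z < \<phi> z")
        case True
        then have wtz: "wt z = \<phi> z" by (simp add: wt_def)
        have "\<phi> z - \<phi> y = K * (dist x0 y - dist x0 z)" by (simp add: \<phi>_def algebra_simps)
        also have "\<dots> \<le> K * dist z y"
          using K0 dist_triangle[of x0 y z] by (intro mult_left_mono) (auto simp: dist_commute)
        also have "\<dots> \<le> (l z - lam * \<phi> z) * dist z y"
          using key[OF True] by (intro mult_right_mono) auto
        finally show ?thesis using wtz by (simp add: wt_def)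
      next
        case False
        then have wtz: "wt z = w z" by (simp add: wt_def)
        have "w z - wt y \<le> w z - w y" by (simp add: wt_def)
        also have "\<dots> \<le> (l z - lam * w z) * dist z y" by (rule wP)
        finally show ?thesis using wtz by simp
      qed
    qed
    then have "wt x0 \<le> w x0" by (rule upper)
    moreover have "wt x0 \<ge> a + t" by (simp add: wt_def \<phi>_def)
    ultimately show False using t0 by (simp add: a_def)
  qed
  show ?thesis using that[of w] w0 wl wP super by blast
qed



lemma lip_of:
  fixes w :: "'a::metric_space \<Rightarrow> real"
  assumes "\<And>x y. w x - w y \<le> B * dist x y" "0 \<le> B"
  shows "B-lipschitz_on UNIV w"
proof (rule lipschitz_onI)
  fix x y :: 'a
  have "dist y x = dist x y" by (rule dist_commute)
  then show "dist (w x) (w y) \<le> B * dist x y"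
    using assms(1)[of x y] assms(1)[of y x] unfolding dist_real_def by (simp add: abs_le_iff)
qed (rule assms(2))

lemma lsc_of_lip:
  fixes w :: "'a::metric_space \<Rightarrow> real"
  assumes "B-lipschitz_on UNIV w"
  shows "lsc (\<lambda>x. ereal (w x))"
  unfolding lsc_def
proof (intro allI impI)
  fix x c assume c: "c < ereal (w x)"
  have "isCont w x"
    using lipschitz_on_continuous_on[OF assms] by (simp add: continuous_on_eq_continuous_at)
  then have "(w \<longlongrightarrow> w x) (nhds x)" unfolding isCont_def by (simp add: tendsto_at_iff_tendsto_nhds)
  then have "((\<lambda>y. ereal (w y)) \<longlongrightarrow> ereal (w x)) (nhds x)" by (rule tendsto_ereal)
  then show "eventually (\<lambda>y. c < ereal (w y)) (nhds x)" using c by (rule order_tendstoD(1))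
qed

theorem proposition3p13:
  fixes lam :: real and l :: "'a::metric_space \<Rightarrow> real"
  assumes "compact (UNIV :: 'a set)"
    and "lam > 0"
    and "lsc l" and "bounded (range l)" and "(INF x. l x) = 0"
  shows "(\<forall>u v :: 'a \<Rightarrow> real. lsc u \<and> lsc v \<and> bounded (range u) \<and> bounded (range v) \<and>
            is_subsolution lam l (\<lambda>x. ereal (u x)) \<and> is_supersolution lam l (\<lambda>x. ereal (v x))
            \<longrightarrow> (\<forall>x. u x \<le> v x))
         \<and> (\<exists>w :: 'a \<Rightarrow> real. is_solution lam l (\<lambda>x. ereal (w x)) \<and> (\<exists>L. L-lipschitz_on UNIV w)
              \<and> (\<forall>w'. is_solution lam l w' \<longrightarrow> w' = (\<lambda>x. ereal (w x))))"
proof -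
  note cpt = assms(1) and lam = assms(2) and lscl = assms(3)
  obtain B where B: "\<And>x. l x \<le> B"
  proof -
    obtain a where "\<forall>y\<in>range l. norm y \<le> a" using assms(4) unfolding bounded_iff by blast
    then have "l x \<le> a" for x by (metis abs_le_D1 rangeI real_norm_def)
    then show ?thesis using that by blast
  qed
  have bddb: "bdd_below (range l)" using assms(4) by (rule bounded_imp_bdd_below)
  have l0: "0 \<le> l x" for x
    using cINF_lower[OF bddb, of x] assms(5) by simp
  have B0: "0 \<le> B" using l0[of undefined] B[of undefined] by linarith
  have nn: "0 \<le> u x" if "(INF x. ereal (u x)) = 0" for u :: "'a \<Rightarrow> real" and x
  proof -
    have "(INF x. ereal (u x)) \<le> ereal (u x)" by (rule INF_lower) simp
    with that show ?thesis by simp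
  qed
  have cmp: "u x \<le> v x" if "is_subsolution lam l (\<lambda>x. ereal (u x))"
      "is_supersolution lam l (\<lambda>x. ereal (v x))" for u v :: "'a \<Rightarrow> real" and x
  proof -
    from that(1) have su: "\<And>x. ereal lam * ereal (u x) + global_slope (\<lambda>x. ereal (u x)) x \<le> ereal (l x)"
      and ui: "(INF x. ereal (u x)) = 0" unfolding is_subsolution_def by auto
    from that(2) have sv: "\<And>x. ereal (l x) \<le> ereal lam * ereal (v x) + global_slope (\<lambda>x. ereal (v x)) x"
      and lv: "lsc (\<lambda>x. ereal (v x))" unfolding is_supersolution_def by auto
    show ?thesis by (rule comparison[OF cpt lam B su nn[OF ui] sv lv])
  qed
  obtain w where w0: "\<And>x. 0 \<le> w x" and wl: "\<And>x. lam * w x \<le> l x"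
    and wP: "\<And>x y. w x - w y \<le> (l x - lam * w x) * dist x y"
    and wsup: "\<And>x. ereal (l x) \<le> ereal lam * ereal (w x) + global_slope (\<lambda>x. ereal (w x)) x"
    using perron[OF lam l0 lscl] by blast
  have wB: "w x - w y \<le> B * dist x y" for x y
  proof -
    have "0 \<le> lam * w x" using lam w0[of x] by simp
    then have "l x - lam * w x \<le> B" using B[of x] by linarith
    then have "(l x - lam * w x) * dist x y \<le> B * dist x y"
      by (rule mult_right_mono) simp
    then show ?thesis using wP[of x y] by linarith
  qed
  have wlip: "B-lipschitz_on UNIV w" using wB B0 by (rule lip_of)
  have wlsc: "lsc (\<lambda>x. ereal (w x))" using wlip by (rule lsc_of_lip)
  have winf: "(INF x. ereal (w x)) = 0"
  proof (rule antisym)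
    show "0 \<le> (INF x. ereal (w x))" using w0 by (intro INF_greatest) simp
  next
    show "(INF x. ereal (w x)) \<le> 0"
    proof (rule ereal_le_epsilon2)
      fix e :: real assume e: "0 < e"
      have "(INF x. l x) < lam * e" using assms(5) lam e by simp
      then obtain x where x: "l x < lam * e" using cINF_less_iff[of UNIV l] bddb by auto
      have "lam * w x < lam * e" using wl[of x] x by linarith
      then have "w x < e" using lam by simp
      have "(INF x. ereal (w x)) \<le> ereal (w x)" by (rule INF_lower) simp
      also have "\<dots> \<le> ereal e" using \<open>w x < e\<close> by simp
      finally show "(INF x. ereal (w x)) \<le> 0 + ereal e" by simp
    qed
  qed
  have wsub: "ereal lam * ereal (w x) + global_slope (\<lambda>x. ereal (w x)) x \<le> ereal (l x)" for x
    unfolding sub_iff using wl wP by blast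
  have wsol: "is_solution lam l (\<lambda>x. ereal (w x))"
    unfolding is_solution_def is_subsolution_def is_supersolution_def no_minus_inf_def
    using wlsc winf wsub wsup by simp
  have uniq: "w' = (\<lambda>x. ereal (w x))" if sol: "is_solution lam l w'" for w'
  proof -
    have sub': "ereal lam * w' x + global_slope w' x \<le> ereal (l x)" for x
      using sol by (simp add: is_solution_def is_subsolution_def)
    have fin: "w' x \<noteq> \<infinity>" for x
    proof
      assume inf: "w' x = \<infinity>"
      then have "global_slope w' x = \<infinity>" by (simp add: global_slope_def)
      then show False using sub'[of x] inf lam by simp
    qed
    have nm: "w' x \<noteq> -\<infinity>" for x
      using sol by (simp add: is_solution_def is_subsolution_def no_minus_inf_def)
    define w'' where "w'' x = real_of_ereal (w' x)" for x
    have eq: "w' = (\<lambda>x. ereal (w'' x))"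
    proof
      fix x
      have "\<bar>w' x\<bar> \<noteq> \<infinity>" using fin[of x] nm[of x] by (cases "w' x") auto
      then show "w' x = ereal (w'' x)" by (simp add: w''_def ereal_real)
    qed
    have s2: "is_solution lam l (\<lambda>x. ereal (w'' x))" using sol eq by simp
    have "w'' x \<le> w x" for x
      using s2 wsol by (intro cmp) (auto simp: is_solution_def)
    moreover have "w x \<le> w'' x" for x
      using s2 wsol by (intro cmp) (auto simp: is_solution_def)
    ultimately show ?thesis using eq by (auto intro!: ext antisym)
  qed
  show ?thesis
    using cmp wsol wlip uniq by blast
qed

end
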